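(* There exist numbers $\lambda_0>1$ and $C>0$, depending only on $\xi$, $d$ and $h$, such that for all $\lambda\ge\lambda_0$ and all $u\in H_0^{2,h}(\Omega_h)$ the following Carleman estimate holds: $$B_h(u,\lambda)\ge C\sum_{j,s}h^2\int_{-\xi}^{d}|u_{zz}(x_j,y_s,z)|^2\varphi_\lambda(z)\,dz+C\lambda\sum_{j,s}h^2\int_{-\xi}^{d}|u_z(x_j,y_s,z)|^2\varphi_\lambda(z)\,dz+C\lambda^3\sum_{j,s}h^2\int_{-\xi}^{d}|u(x_j,y_s,z)|^2\varphi_\lambda(z)\,dz,$$ where $$B_h(u,\lambda)=\sum_{j,s}h^2\int_{-\xi}^{d}|\Delta^h u(x_j,y_s,z)|^2\varphi_\lambda(z)\,dz .$$
   Context: Let $b,\xi,d>0$, $\Omega=\{(x,y,z):|x|<b,|y|<b,\,-\xi<z<d\}$, and $\Gamma=\{(x,y,z):|x|<b,|y|<b,\,z=-\xi\}$. Fix a grid step $h>0$ and a uniform grid $\{(x_j,y_s)\}_{j,s=1}^{N_h}\subset[-b,b]^2$ with step $h$. Set $\Omega_h=\{(x_j,y_s,z):1\le j,s\le N_h,\ z\in(-\xi,d)\}$. A semidiscrete function is a family $\{f(x_j,y_s,z)\}_{j,s=1}^{N_h}$ of functions of $z\in(-\xi,d)$. Complex valued functions are identified with pairs of real valued functions (real and imaginary parts). A grid point $(x_j,y_s)$ is interior if $|x_j|<b,|y_s|<b$; at interior grid points define $u^h_{xx}(x_j,y_s,z)=\big(u(x_j-h,y_s,z)-2u(x_j,y_s,z)+u(x_j+h,y_s,z)\big)/h^2$,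 analogously $u^h_{yy}$, and $\Delta^h u=u_{zz}+u^h_{xx}+u^h_{yy}$. Difference operators are evaluated only at interior grid points, and sums $\sum_{j,s}$ run over the grid points at which the summand is defined. The space $H^{2,h}(\Omega_h)$ consists of semidiscrete complex valued functions with finite norm $\|f\|^2_{H^{2,h}(\Omega_h)}=\sum_{j,s=1}^{N_h}\sum_{r=0}^{2}h^2\int_{-\xi}^{d}|\partial_z^r f(x_j,y_s,z)|^2dz$. The subspace $H_0^{2,h}(\Omega_h)$ consists of $f\in H^{2,h}(\Omega_h)$ with $f|_{\partial\Omega}=0$ and $f_z|_\Gamma=0$, meaning: $f(x_j,y_s,z)=0$ for all $z$ whenever $(x_j,y_s)$ lies on the boundary of $[-b,b]^2$, $f(x_j,y_s,-\xi)=f(x_j,y_s,d)=0$ and $f_z(x_j,y_s,-\xi)=0$ for all $j,s$. The Carleman weight function is $\varphi_\lambda(z)=e^{-2\lambda z}$. *)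

theory Defs
  imports "HOL-Analysis.Analysis"
begin

text \<open>One-dimensional Sobolev space H^2(a,b), complex valued, via its standard
  characterisation: f (continuous representative) is the integral of f1, f1 is the
  integral of f2, and f2 is square integrable on (a,b).  f1, f2 are the (weak)
  derivatives f_z, f_zz.\<close>
definition H2_on :: "real \<Rightarrow> real \<Rightarrow> (real \<Rightarrow> complex) \<Rightarrow> (real \<Rightarrow> complex) \<Rightarrow> (real \<Rightarrow> complex) \<Rightarrow> bool" where
  "H2_on a b f f1 f2 \<longleftrightarrow>
     f2 measurable_on {a..b} \<and> (\<lambda>z. (cmod (f2 z))\<^sup>2) integrable_on {a..b} \<and>
     (\<forall>z\<in>{a..b}. (f2 has_integral (f1 z - f1 a)) {a..z} \<and> (f1 has_integral (f z - f a)) {a..z})"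

text \<open>Grid indices j,s range over {1..N}; x_j = -b + (j-1) h, y_s = -b + (s-1) h,
  with (N-1) h = 2b. Boundary grid points: j or s equal to 1 or N.\<close>
definition grid_boundary :: "nat \<Rightarrow> nat \<Rightarrow> nat \<Rightarrow> bool" where
  "grid_boundary N j s \<longleftrightarrow> j = 1 \<or> j = N \<or> s = 1 \<or> s = N"

definition grid_interior :: "nat \<Rightarrow> nat \<Rightarrow> nat \<Rightarrow> bool" where
  "grid_interior N j s \<longleftrightarrow> 2 \<le> j \<and> j + 1 \<le> N \<and> 2 \<le> s \<and> s + 1 \<le> N"

definition lap_h :: "real \<Rightarrow> (nat \<Rightarrow> nat \<Rightarrow> real \<Rightarrow> complex) \<Rightarrow> (nat \<Rightarrow> nat \<Rightarrow> real \<Rightarrow> complex)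
    \<Rightarrow> nat \<Rightarrow> nat \<Rightarrow> real \<Rightarrow> complex" where
  "lap_h h u uzz j s z =
     uzz j s z
     + (u (j - 1) s z - 2 * u j s z + u (j + 1) s z) / of_real (h\<^sup>2)
     + (u j (s - 1) z - 2 * u j s z + u j (s + 1) z) / of_real (h\<^sup>2)"

definition in_H0_2h :: "real \<Rightarrow> real \<Rightarrow> nat \<Rightarrow> (nat \<Rightarrow> nat \<Rightarrow> real \<Rightarrow> complex)
    \<Rightarrow> (nat \<Rightarrow> nat \<Rightarrow> real \<Rightarrow> complex) \<Rightarrow> (nat \<Rightarrow> nat \<Rightarrow> real \<Rightarrow> complex) \<Rightarrow> bool" where
  "in_H0_2h \<xi> d N u uz uzz \<longleftrightarrow>
     (\<forall>j\<in>{1..N}. \<forall>s\<in>{1..N}.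
        H2_on (-\<xi>) d (u j s) (uz j s) (uzz j s) \<and>
        u j s (-\<xi>) = 0 \<and> u j s d = 0 \<and> uz j s (-\<xi>) = 0 \<and>
        (grid_boundary N j s \<longrightarrow> (\<forall>z\<in>{-\<xi>..d}. u j s z = 0)))"

definition carleman_weight :: "real \<Rightarrow> real \<Rightarrow> real" where
  "carleman_weight lam z = exp (-2 * lam * z)"

definition wsum :: "real \<Rightarrow> real \<Rightarrow> real \<Rightarrow> nat \<Rightarrow> (nat \<Rightarrow> nat \<Rightarrow> bool) \<Rightarrow> real
    \<Rightarrow> (nat \<Rightarrow> nat \<Rightarrow> real \<Rightarrow> complex) \<Rightarrow> real" where
  "wsum \<xi> d h N P lam f =
     (\<Sum>j\<in>{1..N}. \<Sum>s\<in>{1..N}. if P j s then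
        h\<^sup>2 * integral {-\<xi>..d} (\<lambda>z. (cmod (f j s z))\<^sup>2 * carleman_weight lam z) else 0)"

definition B_h :: "real \<Rightarrow> real \<Rightarrow> real \<Rightarrow> nat \<Rightarrow> real
    \<Rightarrow> (nat \<Rightarrow> nat \<Rightarrow> real \<Rightarrow> complex) \<Rightarrow> (nat \<Rightarrow> nat \<Rightarrow> real \<Rightarrow> complex) \<Rightarrow> real" where
  "B_h \<xi> d h N lam u uzz = wsum \<xi> d h N (grid_interior N) lam (lap_h h u uzz)"

end

theory Submission
  imports Defs
begin

lemma ae_zero_from_indef:
  fixes g :: "real \<Rightarrow> real"
  assumes gi: "g absolutely_integrable_on {a..b}"
    and z: "\<And>z. z \<in> {a..b} \<Longrightarrow> integral {a..z} g = 0"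
  shows "negligible {x \<in> {a..b}. g x \<noteq> 0}"
proof -
  define G where "G x = (if x \<in> {a..b} then g x else 0)" for x
  have GU: "G absolutely_integrable_on UNIV"
    using gi absolutely_integrable_restrict_UNIV[of "{a..b}" g] unfolding G_def by simp
  have GL: "integrable lebesgue G"
    using GU unfolding set_integrable_def by simp
  then have "G \<in> borel_measurable lebesgue" by auto
  from completion_ex_borel_measurable_real[OF this]
  obtain G' where G'm: "G' \<in> borel_measurable lborel" and ae: "AE x in lborel. G x = G' x"
    by auto
  have aeL: "AE x in lebesgue. G x = G' x" using ae by (simp add: AE_completion_iff)
  have G'L: "integrable lebesgue G'"
  proof (rule integrable_cong_AE_imp[OF GL _ aeL])
    show "G' \<in> borel_measurable lebesgue" using G'm by (rule measurable_completion)
  qed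
  have G'i: "integrable lborel G'"
    using G'L integrable_completion[OF G'm] by simp
  have int0: "(\<integral>t. indicator {x<..} t * G' t \<partial>lborel) = 0" for x
  proof -
    have m: "(\<lambda>t. indicator {x<..} t * G' t) \<in> borel_measurable lborel" using G'm by measurable
    have "(\<integral>t. indicator {x<..} t * G' t \<partial>lborel) = (\<integral>t. indicator {x<..} t * G' t \<partial>lebesgue)"
      using integral_completion[OF m] by simp
    also have "\<dots> = (\<integral>t. indicator {x<..} t * G t \<partial>lebesgue)"
    proof (rule integral_cong_AE)
      show "(\<lambda>t. indicator {x<..} t * G' t) \<in> borel_measurable lebesgue"
        using m by (rule measurable_completion)
      have "G \<in> borel_measurable lebesgue" using GL by auto
      moreover have "{x<..} \<in> sets lebesgue" by simp
      ultimately show "(\<lambda>t. indicator {x<..} t * G t) \<in> borel_measurable lebesgue"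
        by (intro borel_measurable_times borel_measurable_indicator)
      show "AE t in lebesgue. indicator {x<..} t * G' t = indicator {x<..} t * G t"
        using aeL by eventually_elim auto
    qed
    also have "\<dots> = set_lebesgue_integral lebesgue {x<..} G"
      unfolding set_lebesgue_integral_def by simp
    also have "\<dots> = integral {x<..} G"
    proof (rule set_lebesgue_integral_eq_integral)
      show "set_integrable lebesgue {x<..} G"
        unfolding set_integrable_def using GL by (intro integrable_mult_indicator) auto
    qed
    also have "\<dots> = integral ({a..b} \<inter> {x<..}) g"
      unfolding G_def by (rule integral_restrict_Int)
    also have "\<dots> = 0"
    proof (cases "x < a")
      case True
      then have "{a..b} \<inter> {x<..} = {a..b}" by auto
      then show ?thesis using z[of b] True by (cases "a \<le> b") auto
    next
      case False
      show ?thesis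
      proof (cases "x < b")
        case True
        have gI: "g integrable_on {a..b}" using gi by (simp add: absolutely_integrable_on_def)
        have "{a..b} \<inter> {x<..} = {x<..b}" using False True by auto
        moreover have "integral {x<..b} g = integral {x..b} g"
          by (rule integral_spike_set) (auto intro: negligible_subset[of "{x}"])
        moreover have "integral {a..x} g + integral {x..b} g = integral {a..b} g"
          by (rule Henstock_Kurzweil_Integration.integral_combine) (use False True gI in auto)
        ultimately show ?thesis using z[of x] z[of b] False True by auto
      next
        case False
        then have "{a..b} \<inter> {x<..} = {}" by auto
        then show ?thesis by simp
      qed
    qed
    finally show ?thesis .
  qed
  define P where "P t = max (G' t) 0" for t
  define Q where "Q t = max (- G' t) 0" for t
  have Pm: "P \<in> borel_measurable lborel" "Q \<in> borel_measurable lborel"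
    unfolding P_def Q_def using G'm by measurable
  have Pi: "integrable lborel P" "integrable lborel Q"
    unfolding P_def Q_def using G'i by (auto intro!: integrable_max integrable_minus)
  have PiI: "integrable lborel (\<lambda>t. indicator {x<..} t * P t)" "integrable lborel (\<lambda>t. indicator {x<..} t * Q t)" for x
    using integrable_mult_indicator[of "{x<..}" lborel P] integrable_mult_indicator[of "{x<..}" lborel Q] Pi by auto
  have eqPQ: "(\<integral>t. indicator {x<..} t * P t \<partial>lborel) = (\<integral>t. indicator {x<..} t * Q t \<partial>lborel)" for x
  proof -
    have "(\<lambda>t. indicator {x<..} t * G' t) = (\<lambda>t. indicator {x<..} t * P t - indicator {x<..} t * Q t)"
      by (auto simp: P_def Q_def fun_eq_iff max_def)
    then have "(\<integral>t. indicator {x<..} t * P t \<partial>lborel) - (\<integral>t. indicator {x<..} t * Q t \<partial>lborel) = 0"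
      using int0[of x] Bochner_Integration.integral_diff[OF PiI(1)[of x] PiI(2)[of x]] by simp
    then show ?thesis by simp
  qed
  have em: "emeasure (density lborel (\<lambda>t. ennreal (P t))) {x<..} = ennreal (\<integral>t. indicator {x<..} t * P t \<partial>lborel)"
     "emeasure (density lborel (\<lambda>t. ennreal (Q t))) {x<..} = ennreal (\<integral>t. indicator {x<..} t * Q t \<partial>lborel)" for x
  proof -
    have "emeasure (density lborel (\<lambda>t. ennreal (P t))) {x<..} = (\<integral>\<^sup>+t. ennreal (P t) * indicator {x<..} t \<partial>lborel)"
      using Pm by (subst emeasure_density) auto
    also have "\<dots> = (\<integral>\<^sup>+t. ennreal (indicator {x<..} t * P t) \<partial>lborel)"
      by (intro nn_integral_cong) (auto simp: indicator_def)
    also have "\<dots> = ennreal (\<integral>t. indicator {x<..} t * P t \<partial>lborel)"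
      by (rule nn_integral_eq_integral[OF PiI(1)]) (auto simp: P_def indicator_def)
    finally show "emeasure (density lborel (\<lambda>t. ennreal (P t))) {x<..} = ennreal (\<integral>t. indicator {x<..} t * P t \<partial>lborel)" .
    have "emeasure (density lborel (\<lambda>t. ennreal (Q t))) {x<..} = (\<integral>\<^sup>+t. ennreal (Q t) * indicator {x<..} t \<partial>lborel)"
      using Pm by (subst emeasure_density) auto
    also have "\<dots> = (\<integral>\<^sup>+t. ennreal (indicator {x<..} t * Q t) \<partial>lborel)"
      by (intro nn_integral_cong) (auto simp: indicator_def)
    also have "\<dots> = ennreal (\<integral>t. indicator {x<..} t * Q t \<partial>lborel)"
      by (rule nn_integral_eq_integral[OF PiI(2)]) (auto simp: Q_def indicator_def)
    finally show "emeasure (density lborel (\<lambda>t. ennreal (Q t))) {x<..} = ennreal (\<integral>t. indicator {x<..} t * Q t \<partial>lborel)" .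
  qed
  have "density lborel (\<lambda>t. ennreal (P t)) = density lborel (\<lambda>t. ennreal (Q t))"
    by (rule measure_eqI_lessThan) (auto simp: em eqPQ)
  then have "AE t in lborel. ennreal (P t) = ennreal (Q t)"
    using Pm by (intro sigma_finite_measure.density_unique[OF sigma_finite_lborel]) auto
  then have "AE t in lborel. G' t = 0"
    by eventually_elim (auto simp: P_def Q_def max_def split: if_splits)
  with ae have "AE t in lborel. G t = 0" by eventually_elim auto
  then have "AE t in lebesgue. G t = 0" by (simp add: AE_completion_iff)
  then obtain N where N: "N \<in> null_sets lebesgue" "{t \<in> space lebesgue. \<not> G t = 0} \<subseteq> N"
    by (auto simp: eventually_ae_filter)
  have "{x \<in> {a..b}. g x \<noteq> 0} \<subseteq> N" using N(2) by (auto simp: G_def)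
  moreover have "negligible N" using N(1) by (simp add: negligible_iff_null_sets)
  ultimately show ?thesis by (rule negligible_subset[rotated])
qed

lemma c1_step_real:
  fixes p q :: "real \<Rightarrow> real" and a d lam :: real
  assumes ad: "a \<le> d" and lam: "lam > 0"
    and der: "\<And>x. x \<in> {a..d} \<Longrightarrow> (p has_real_derivative q x) (at x within {a..d})"
    and qc: "continuous_on {a..d} q" and pa: "p a = 0"
  shows "lam\<^sup>2 * integral {a..d} (\<lambda>x. (p x)\<^sup>2 * exp (-2 * lam * x))
         \<le> integral {a..d} (\<lambda>x. (q x)\<^sup>2 * exp (-2 * lam * x))"
proof -
  have pc: "continuous_on {a..d} p"
    unfolding continuous_on_eq_continuous_within using der DERIV_continuous by blast
  define g where "g x = p x * exp (- lam * x)" for x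
  define g' where "g' x = (q x - lam * p x) * exp (- lam * x)" for x
  define h' where "h' x = 2 * g x * g' x" for x
  have gd: "(g has_real_derivative g' x) (at x within {a..d})" if "x \<in> {a..d}" for x
    unfolding g_def g'_def
    by (auto intro!: derivative_eq_intros der[OF that] simp: algebra_simps)
  have hd: "((\<lambda>x. (g x)\<^sup>2) has_vector_derivative h' x) (at x within {a..d})" if "x \<in> {a..d}" for x
    unfolding has_real_derivative_iff_has_vector_derivative[symmetric] h'_def
    by (auto intro!: derivative_eq_intros gd[OF that] simp: algebra_simps)
  have hI: "(h' has_integral ((g d)\<^sup>2 - (g a)\<^sup>2)) {a..d}"
    using fundamental_theorem_of_calculus[OF ad hd] by simp
  have ga: "g a = 0" using pa by (simp add: g_def)
  have c1: "continuous_on {a..d} (\<lambda>x. (q x)\<^sup>2 * exp (-2 * lam * x))"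
    by (intro continuous_intros qc)
  have c2: "continuous_on {a..d} (\<lambda>x. (p x)\<^sup>2 * exp (-2 * lam * x))"
    by (intro continuous_intros pc)
  have i1: "(\<lambda>x. (q x)\<^sup>2 * exp (-2 * lam * x)) integrable_on {a..d}"
    using c1 integrable_continuous_real by blast
  have i2: "(\<lambda>x. lam\<^sup>2 * ((p x)\<^sup>2 * exp (-2 * lam * x))) integrable_on {a..d}"
    by (intro integrable_continuous_real continuous_intros pc)
  have i3: "(\<lambda>x. lam * h' x) integrable_on {a..d}"
    using hI integrable_cmul[of h' "{a..d}" lam] by (auto simp: integrable_on_def)
  have pw: "lam * h' x \<le> (q x)\<^sup>2 * exp (-2 * lam * x) - lam\<^sup>2 * ((p x)\<^sup>2 * exp (-2 * lam * x))" for x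
  proof -
    have e: "exp (-2 * lam * x) = exp (- lam * x) * exp (- lam * x)"
      by (simp flip: exp_add)
    have "(q x)\<^sup>2 * exp (-2 * lam * x) - lam\<^sup>2 * ((p x)\<^sup>2 * exp (-2 * lam * x)) - lam * h' x
          = (g' x)\<^sup>2"
      unfolding e h'_def g_def g'_def by (simp add: power2_eq_square algebra_simps)
    moreover have "0 \<le> (g' x)\<^sup>2" by simp
    ultimately show ?thesis by linarith
  qed
  have "lam * ((g d)\<^sup>2 - (g a)\<^sup>2) = integral {a..d} (\<lambda>x. lam * h' x)"
    using hI by (simp add: integral_unique)
  also have "\<dots> \<le> integral {a..d} (\<lambda>x. (q x)\<^sup>2 * exp (-2 * lam * x) - lam\<^sup>2 * ((p x)\<^sup>2 * exp (-2 * lam * x)))"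
    by (rule integral_le[OF i3 integrable_diff[OF i1 i2]]) (use pw in auto)
  also have "\<dots> = integral {a..d} (\<lambda>x. (q x)\<^sup>2 * exp (-2 * lam * x)) - lam\<^sup>2 * integral {a..d} (\<lambda>x. (p x)\<^sup>2 * exp (-2 * lam * x))"
    using integral_diff[OF i1 i2] by simp
  finally have X: "lam * ((g d)\<^sup>2 - (g a)\<^sup>2) \<le> integral {a..d} (\<lambda>x. (q x)\<^sup>2 * exp (-2 * lam * x)) - lam\<^sup>2 * integral {a..d} (\<lambda>x. (p x)\<^sup>2 * exp (-2 * lam * x))" .
  have "0 \<le> lam * ((g d)\<^sup>2 - (g a)\<^sup>2)" using ga lam by simp
  with X show ?thesis by linarith
qed

lemma H2_reg:
  assumes H: "H2_on a d f f1 f2" and ad: "a \<le> d"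
  shows "f2 integrable_on {a..d}"
    and "f2 absolutely_integrable_on {a..d}"
    and "\<And>z. z \<in> {a..d} \<Longrightarrow> f1 z = f1 a + integral {a..z} f2"
    and "continuous_on {a..d} f1"
    and "\<And>z. z \<in> {a..d} \<Longrightarrow> f z = f a + integral {a..z} f1"
    and "\<And>x. x \<in> {a..d} \<Longrightarrow> (f has_vector_derivative f1 x) (at x within {a..d})"
    and "continuous_on {a..d} f"
    and "f2 \<in> borel_measurable (lebesgue_on {a..d})"
proof -
  have m: "f2 measurable_on {a..d}" and sq: "(\<lambda>z. (cmod (f2 z))\<^sup>2) integrable_on {a..d}"
    and hi: "\<And>z. z \<in> {a..d} \<Longrightarrow> (f2 has_integral (f1 z - f1 a)) {a..z} \<and> (f1 has_integral (f z - f a)) {a..z}"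
    using H unfolding H2_on_def by auto
  show f2i: "f2 integrable_on {a..d}" using hi[of d] ad by (auto simp: integrable_on_def)
  show bm: "f2 \<in> borel_measurable (lebesgue_on {a..d})"
    using m by (simp add: measurable_on_iff_borel_measurable)
  show "f2 absolutely_integrable_on {a..d}"
  proof (rule measurable_bounded_by_integrable_imp_absolutely_integrable[OF bm])
    show "(\<lambda>z. 1 + (cmod (f2 z))\<^sup>2) integrable_on {a..d}"
      using sq by (intro integrable_add) auto
    show "norm (f2 x) \<le> 1 + (cmod (f2 x))\<^sup>2" for x
    proof -
      have "0 \<le> (cmod (f2 x) - 1)\<^sup>2" by simp
      then have "2 * cmod (f2 x) \<le> (cmod (f2 x))\<^sup>2 + 1" by (simp add: power2_diff)
      moreover have "0 \<le> cmod (f2 x)" by simp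
      ultimately show ?thesis by linarith
    qed
  qed auto
  show e1: "f1 z = f1 a + integral {a..z} f2" if "z \<in> {a..d}" for z
    proof -
    have "integral {a..z} f2 = f1 z - f1 a" using hi[OF that] by (blast intro: integral_unique)
    then show ?thesis by simp
  qed
  have "continuous_on {a..d} (\<lambda>z. f1 a + integral {a..z} f2)"
    by (intro continuous_intros indefinite_integral_continuous_1 f2i)
  then show f1c: "continuous_on {a..d} f1"
    by (rule continuous_on_eq) (simp add: e1[symmetric])
  show e0: "f z = f a + integral {a..z} f1" if "z \<in> {a..d}" for z
    proof -
    have "integral {a..z} f1 = f z - f a" using hi[OF that] by (blast intro: integral_unique)
    then show ?thesis by simp
  qed
  show fd: "(f has_vector_derivative f1 x) (at x within {a..d})" if x: "x \<in> {a..d}" for x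
  proof -
    have "((\<lambda>z. f a + integral {a..z} f1) has_vector_derivative f1 x) (at x within {a..d})"
      using integral_has_vector_derivative[OF f1c x] by (auto intro!: derivative_eq_intros)
    then show ?thesis
      by (rule has_vector_derivative_transform_within[where d=1]) (use x in \<open>auto simp: e0[symmetric]\<close>)
  qed
  show "continuous_on {a..d} f"
    unfolding continuous_on_eq_continuous_within
    using fd has_vector_derivative_continuous by blast
qed

lemma amgm_pt:
  fixes e w x :: real
  assumes "0 < e" "0 < w"
  shows "x \<le> (e * (x\<^sup>2 * w) + 1 / (w * e)) / 2"
proof -
  have "0 \<le> (e * w * x - 1)\<^sup>2" by simp
  then have "2 * (e * w) * x \<le> (e * w) * (e * (x\<^sup>2 * w)) + 1"
    by (simp add: power2_eq_square algebra_simps)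
  then have "2 * (e * w) * x \<le> (e * w) * (e * (x\<^sup>2 * w) + 1 / (w * e))"
    using assms by (simp add: algebra_simps)
  then have "2 * x \<le> e * (x\<^sup>2 * w) + 1 / (w * e)"
    using assms by (simp add: mult.assoc)
  then show ?thesis by simp
qed

lemma amgm_opt:
  fixes x A K :: real
  assumes "0 \<le> x" "0 < K" "\<And>e. e > 0 \<Longrightarrow> x \<le> (e * A + K / e) / 2"
  shows "x\<^sup>2 \<le> A * K"
proof (cases "x = 0")
  case True
  have h: "0 \<le> (e * A + K / e) / 2" if "e > 0" for e using assms(3)[OF that] True by simp
  show ?thesis
  proof (rule ccontr)
    assume "\<not> x\<^sup>2 \<le> A * K"
    then have "A * K < 0" using True by simp
    then have "A < 0" using assms(2) by (simp add: mult_less_0_iff)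
    define e where "e = 1 + 2 * K / (- A)"
    have q: "2 * K / (- A) > 0" using \<open>A < 0\<close> assms(2) by (intro divide_pos_pos) auto
    have e0: "e > 0" and e1: "e > 1" using q by (auto simp: e_def)
    have "e * A = A - 2 * K" using \<open>A < 0\<close> by (simp add: e_def field_simps)
    moreover have "K / e < K" using e1 assms(2) by (simp add: divide_less_eq)
    ultimately have "(e * A + K / e) / 2 < 0" using \<open>A < 0\<close> assms(2) by simp
    with h[OF e0] show False by simp
  qed
next
  case False
  then have x0: "x > 0" using assms(1) by simp
  have "x \<le> ((K / x) * A + K / (K / x)) / 2" using assms(3)[of "K / x"] x0 assms(2) by simp
  also have "K / (K / x) = x" using x0 assms(2) by simp
  finally have "2 * x \<le> (K / x) * A + x" by simp
  then have "x \<le> (K / x) * A" by simp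
  then have "x * x \<le> x * ((K / x) * A)" using x0 by (intro mult_left_mono) auto
  also have "x * ((K / x) * A) = A * K" using x0 by simp
  finally show ?thesis by (simp add: power2_eq_square)
qed

lemma weighted_sq_integrable:
  fixes g :: "real \<Rightarrow> complex"
  assumes gm: "g \<in> borel_measurable (lebesgue_on {a..d})"
    and gi: "(\<lambda>z. (cmod (g z))\<^sup>2) integrable_on {a..d}"
  shows "(\<lambda>z. (cmod (g z))\<^sup>2 * exp (-2 * lam * z)) integrable_on {a..d}"
proof (rule measurable_bounded_by_integrable_imp_integrable)
  show "(\<lambda>z. (cmod (g z))\<^sup>2 * exp (-2 * lam * z)) \<in> borel_measurable (lebesgue_on {a..d})"
  proof -
    have em: "(\<lambda>z. exp (-2 * lam * z)) \<in> borel_measurable (lebesgue_on {a..d})"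
      by (intro continuous_imp_measurable_on_sets_lebesgue continuous_intros) auto
    note [measurable] = gm em
    show ?thesis by measurable
  qed
  show "(\<lambda>z. (exp (-2 * lam * a) + exp (-2 * lam * d)) * (cmod (g z))\<^sup>2) integrable_on {a..d}"
    using integrable_cmul[OF gi, of "exp (-2 * lam * a) + exp (-2 * lam * d)"] by simp
  show "norm ((cmod (g z))\<^sup>2 * exp (-2 * lam * z)) \<le> (exp (-2 * lam * a) + exp (-2 * lam * d)) * (cmod (g z))\<^sup>2"
    if "z \<in> {a..d}" for z
  proof -
    have "exp (-2 * lam * z) \<le> exp (-2 * lam * a) + exp (-2 * lam * d)"
    proof (cases "lam \<ge> 0")
      case True
      then have "-2 * lam * z \<le> -2 * lam * a" using that by (simp add: mult_left_mono)
      then show ?thesis by (smt (verit) exp_ge_zero exp_le_cancel_iff)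
    next
      case False
      then have "-2 * lam * z \<le> -2 * lam * d" using that by (simp add: mult_left_mono_neg)
      then show ?thesis by (smt (verit) exp_ge_zero exp_le_cancel_iff)
    qed
    then show ?thesis by (simp add: mult_left_mono mult.commute)
  qed
qed auto

lemma crude_step:
  assumes H: "H2_on a d f f1 f2" and ad: "a \<le> d" and lam: "lam > 0" and f1a: "f1 a = 0"
  shows "integral {a..d} (\<lambda>z. (cmod (f1 z))\<^sup>2 * exp (-2 * lam * z))
     \<le> (d - a) / (2 * lam) * integral {a..d} (\<lambda>z. (cmod (f2 z))\<^sup>2 * exp (-2 * lam * z))"
proof -
  note R = H2_reg[OF H ad]
  define A where "A = integral {a..d} (\<lambda>z. (cmod (f2 z))\<^sup>2 * exp (-2 * lam * z))"
  have sq: "(\<lambda>z. (cmod (f2 z))\<^sup>2) integrable_on {a..d}" using H unfolding H2_on_def by auto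
  have W2: "(\<lambda>z. (cmod (f2 z))\<^sup>2 * exp (-2 * lam * z)) integrable_on {a..d}"
    by (rule weighted_sq_integrable[OF R(8) sq])
  have nI: "(\<lambda>z. cmod (f2 z)) integrable_on {a..d}"
    using R(2) by (simp add: absolutely_integrable_on_def)
  have pt: "(cmod (f1 t))\<^sup>2 * exp (-2 * lam * t) \<le> A / (2 * lam)" if t: "t \<in> {a..d}" for t
  proof -
    have sub: "{a..t} \<subseteq> {a..d}" using t by auto
    have f1t: "f1 t = integral {a..t} f2" using R(3)[OF t] f1a by simp
    have i1: "f2 integrable_on {a..t}" using R(1) sub integrable_on_subinterval by (metis atLeastatMost_subset_iff box_real(2) order_refl)
    have i2: "(\<lambda>z. cmod (f2 z)) integrable_on {a..t}" using nI sub integrable_on_subinterval by (metis atLeastatMost_subset_iff box_real(2) order_refl)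
    have i3: "(\<lambda>z. (cmod (f2 z))\<^sup>2 * exp (-2 * lam * z)) integrable_on {a..t}"
      using W2 sub integrable_on_subinterval by (metis atLeastatMost_subset_iff box_real(2) order_refl)
    have n1: "cmod (f1 t) \<le> integral {a..t} (\<lambda>z. cmod (f2 z))"
      unfolding f1t by (rule integral_norm_bound_integral[OF i1 i2]) simp
    have eI: "((\<lambda>s. exp (2 * lam * s)) has_integral (exp (2 * lam * t) / (2 * lam) - exp (2 * lam * a) / (2 * lam))) {a..t}"
    proof -
      have "((\<lambda>s. exp (2 * lam * s)) has_integral (exp (2 * lam * t) / (2 * lam) - exp (2 * lam * a) / (2 * lam))) {a..t}"
        by (rule fundamental_theorem_of_calculus[where f="\<lambda>s. exp (2 * lam * s) / (2 * lam)"])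
           (use t lam in \<open>auto intro!: derivative_eq_intros simp: has_real_derivative_iff_has_vector_derivative[symmetric]\<close>)
      then show ?thesis .
    qed
    have IA: "integral {a..t} (\<lambda>z. (cmod (f2 z))\<^sup>2 * exp (-2 * lam * z)) \<le> A"
      unfolding A_def by (rule integral_subset_le[OF sub i3 W2]) auto
    have eInt: "(\<lambda>s. exp (2 * lam * s)) integrable_on {a..t}" using eI by (auto simp: integrable_on_def)
    define K where "K = exp (2 * lam * t) / (2 * lam)"
    have K0: "K > 0" using lam by (simp add: K_def)
    have bnd: "cmod (f1 t) \<le> (e * A + K / e) / 2" if e: "e > 0" for e
    proof -
      have "integral {a..t} (\<lambda>z. cmod (f2 z)) \<le> integral {a..t} (\<lambda>z. (e * ((cmod (f2 z))\<^sup>2 * exp (-2 * lam * z)) + exp (2 * lam * z) / e) / 2)"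
      proof (rule integral_le[OF i2])
        show "(\<lambda>z. (e * ((cmod (f2 z))\<^sup>2 * exp (-2 * lam * z)) + exp (2 * lam * z) / e) / 2) integrable_on {a..t}"
          by (intro integrable_on_divide integrable_add integrable_on_mult_right i3 eInt)
        fix z
        have "1 / (exp (-2 * lam * z) * e) = exp (2 * lam * z) / e"
          by (simp add: exp_minus field_simps)
        then show "cmod (f2 z) \<le> (e * ((cmod (f2 z))\<^sup>2 * exp (-2 * lam * z)) + exp (2 * lam * z) / e) / 2"
          using amgm_pt[OF e, of "exp (-2 * lam * z)" "cmod (f2 z)"] by simp
      qed
      also have "\<dots> = (e * integral {a..t} (\<lambda>z. (cmod (f2 z))\<^sup>2 * exp (-2 * lam * z)) + integral {a..t} (\<lambda>z. exp (2 * lam * z)) / e) / 2"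
        using i3 eInt by (simp add: integral_divide integral_add integral_mult_right integrable_on_mult_right integrable_on_divide)
      also have "\<dots> \<le> (e * A + K / e) / 2"
      proof -
        have iK: "integral {a..t} (\<lambda>z. exp (2 * lam * z)) \<le> K"
          using integral_unique[OF eI] lam by (simp add: K_def)
        then have "integral {a..t} (\<lambda>z. exp (2 * lam * z)) / e \<le> K / e" using e by (simp add: divide_right_mono)
        moreover have "e * integral {a..t} (\<lambda>z. (cmod (f2 z))\<^sup>2 * exp (-2 * lam * z)) \<le> e * A"
          using IA e by simp
        ultimately have "e * integral {a..t} (\<lambda>z. (cmod (f2 z))\<^sup>2 * exp (-2 * lam * z)) + integral {a..t} (\<lambda>z. exp (2 * lam * z)) / e \<le> e * A + K / e" by linarith
        then show ?thesis by (rule divide_right_mono) simp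
      qed
      finally show ?thesis using n1 by simp
    qed
    have "(cmod (f1 t))\<^sup>2 \<le> A * K" by (rule amgm_opt[OF norm_ge_zero K0 bnd])
    then have "(cmod (f1 t))\<^sup>2 * exp (-2 * lam * t) \<le> A * K * exp (-2 * lam * t)"
      by (simp add: mult_right_mono)
    also have "A * K * exp (-2 * lam * t) = A / (2 * lam)"
      unfolding K_def by (simp add: exp_minus field_simps flip: exp_add)
    finally show ?thesis .
  qed
  have c: "continuous_on {a..d} (\<lambda>z. (cmod (f1 z))\<^sup>2 * exp (-2 * lam * z))"
    by (intro continuous_intros R(4))
  have "integral {a..d} (\<lambda>z. (cmod (f1 z))\<^sup>2 * exp (-2 * lam * z)) \<le> integral {a..d} (\<lambda>z. A / (2 * lam))"
    by (rule integral_le[OF integrable_continuous_real[OF c]]) (use pt in auto)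
  also have "\<dots> = (d - a) * (A / (2 * lam))" using ad by simp
  finally show ?thesis unfolding A_def by simp
qed

lemma c1_step:
  assumes H: "H2_on a d f f1 f2" and ad: "a \<le> d" and lam: "lam > 0" and fa: "f a = 0"
  shows "lam\<^sup>2 * integral {a..d} (\<lambda>z. (cmod (f z))\<^sup>2 * exp (-2 * lam * z))
     \<le> integral {a..d} (\<lambda>z. (cmod (f1 z))\<^sup>2 * exp (-2 * lam * z))"
proof -
  note R = H2_reg[OF H ad]
  have re: "lam\<^sup>2 * integral {a..d} (\<lambda>x. (Re (f x))\<^sup>2 * exp (-2 * lam * x))
         \<le> integral {a..d} (\<lambda>x. (Re (f1 x))\<^sup>2 * exp (-2 * lam * x))"
  proof (rule c1_step_real[OF ad lam])
    show "((\<lambda>x. Re (f x)) has_real_derivative Re (f1 x)) (at x within {a..d})" if "x \<in> {a..d}" for x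
      by (rule has_field_derivative_Re[OF R(6)[OF that]])
    show "continuous_on {a..d} (\<lambda>x. Re (f1 x))" by (intro continuous_intros R(4))
    show "Re (f a) = 0" using fa by simp
  qed
  have im: "lam\<^sup>2 * integral {a..d} (\<lambda>x. (Im (f x))\<^sup>2 * exp (-2 * lam * x))
         \<le> integral {a..d} (\<lambda>x. (Im (f1 x))\<^sup>2 * exp (-2 * lam * x))"
  proof (rule c1_step_real[OF ad lam])
    show "((\<lambda>x. Im (f x)) has_real_derivative Im (f1 x)) (at x within {a..d})" if "x \<in> {a..d}" for x
      by (rule has_field_derivative_Im[OF R(6)[OF that]])
    show "continuous_on {a..d} (\<lambda>x. Im (f1 x))" by (intro continuous_intros R(4))
    show "Im (f a) = 0" using fa by simp
  qed
  have split: "integral {a..d} (\<lambda>x. (cmod (g x))\<^sup>2 * exp (-2 * lam * x)) =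
      integral {a..d} (\<lambda>x. (Re (g x))\<^sup>2 * exp (-2 * lam * x)) + integral {a..d} (\<lambda>x. (Im (g x))\<^sup>2 * exp (-2 * lam * x))"
    if gc: "continuous_on {a..d} g" for g :: "real \<Rightarrow> complex"
  proof -
    have i1: "(\<lambda>x. (Re (g x))\<^sup>2 * exp (-2 * lam * x)) integrable_on {a..d}"
      by (intro integrable_continuous_real continuous_intros gc)
    have i2: "(\<lambda>x. (Im (g x))\<^sup>2 * exp (-2 * lam * x)) integrable_on {a..d}"
      by (intro integrable_continuous_real continuous_intros gc)
    show ?thesis
      unfolding cmod_power2 distrib_right using integral_add[OF i1 i2] by simp
  qed
  have "lam\<^sup>2 * integral {a..d} (\<lambda>z. (cmod (f z))\<^sup>2 * exp (-2 * lam * z)) =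
     lam\<^sup>2 * integral {a..d} (\<lambda>x. (Re (f x))\<^sup>2 * exp (-2 * lam * x)) + lam\<^sup>2 * integral {a..d} (\<lambda>x. (Im (f x))\<^sup>2 * exp (-2 * lam * x))"
    unfolding split[OF R(7)] by (simp only: distrib_left)
  then show ?thesis
    using re im split[OF R(4)] by linarith
qed

lemma deriv_zero:
  fixes f1 :: "real \<Rightarrow> complex"
  assumes c: "continuous_on {a..d} f1" and ad: "a < d"
    and z: "\<And>z. z \<in> {a..d} \<Longrightarrow> integral {a..z} f1 = 0" and x: "x \<in> {a..d}"
  shows "f1 x = 0"
proof -
  have D1: "((\<lambda>z. integral {a..z} f1) has_vector_derivative f1 x) (at x within {a..d})"
    by (rule integral_has_vector_derivative[OF c x])
  have D0: "((\<lambda>z. integral {a..z} f1) has_vector_derivative 0) (at x within {a..d})"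
  proof (rule has_vector_derivative_transform_within[where d=1 and f="\<lambda>z. 0"])
    show "((\<lambda>z. 0) has_vector_derivative 0) (at x within {a..d})" by (rule derivative_intros)
    show "0 = integral {a..x'} f1" if "x' \<in> {a..d}" for x'
      using z[OF that] by simp
  qed (use x in auto)
  show ?thesis
    using vector_derivative_unique_within_closed_interval[of a d x, unfolded box_real, OF ad x D1 D0] by simp
qed


lemma boundary_zero:
  assumes H: "H2_on a d f f1 f2" and ad: "a < d" and f0: "\<And>z. z \<in> {a..d} \<Longrightarrow> f z = 0"
    and f1a: "f1 a = 0"
  shows "integral {a..d} (\<lambda>z. (cmod (f2 z))\<^sup>2 * exp (-2 * lam * z)) = 0"
proof -
  note R = H2_reg[OF H less_imp_le[OF ad]]
  have fa0: "f a = 0" using f0 ad by simp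
  have f1z: "f1 x = 0" if x: "x \<in> {a..d}" for x
  proof (rule deriv_zero[OF R(4) ad _ x])
    show "integral {a..z} f1 = 0" if "z \<in> {a..d}" for z
      using R(5)[OF that] f0[OF that] fa0 by simp
  qed
  have i0: "integral {a..z} f2 = 0" if "z \<in> {a..d}" for z
    using R(3)[OF that] f1z[OF that] f1a by simp
  have nRe: "negligible {x \<in> {a..d}. (Re \<circ> f2) x \<noteq> 0}"
  proof (rule ae_zero_from_indef)
    show "(Re \<circ> f2) absolutely_integrable_on {a..d}"
      by (rule absolutely_integrable_linear[OF R(2) bounded_linear_Re])
    show "integral {a..z} (Re \<circ> f2) = 0" if "z \<in> {a..d}" for z
    proof -
      have "f2 integrable_on {a..z}"
        using R(1) by (rule integrable_on_subinterval) (use that in auto)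
      then have "integral {a..z} (Re \<circ> f2) = Re (integral {a..z} f2)" by (rule integral_linear[OF _ bounded_linear_Re])
      then show ?thesis using i0[OF that] by simp
    qed
  qed
  have nIm: "negligible {x \<in> {a..d}. (Im \<circ> f2) x \<noteq> 0}"
  proof (rule ae_zero_from_indef)
    show "(Im \<circ> f2) absolutely_integrable_on {a..d}"
      by (rule absolutely_integrable_linear[OF R(2) bounded_linear_Im])
    show "integral {a..z} (Im \<circ> f2) = 0" if "z \<in> {a..d}" for z
    proof -
      have "f2 integrable_on {a..z}"
        using R(1) by (rule integrable_on_subinterval) (use that in auto)
      then have "integral {a..z} (Im \<circ> f2) = Im (integral {a..z} f2)" by (rule integral_linear[OF _ bounded_linear_Im])
      then show ?thesis using i0[OF that] by simp
    qed
  qed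
  have "integral {a..d} (\<lambda>z. (cmod (f2 z))\<^sup>2 * exp (-2 * lam * z)) = integral {a..d} (\<lambda>z. 0::real)"
  proof (rule integral_spike[OF negligible_Un[OF nRe nIm]])
    fix x assume "x \<in> {a..d} - ({x \<in> {a..d}. (Re \<circ> f2) x \<noteq> 0} \<union> {x \<in> {a..d}. (Im \<circ> f2) x \<noteq> 0})"
    then have "f2 x = 0" by (auto simp: complex_eq_iff)
    then show "0 = (cmod (f2 x))\<^sup>2 * exp (-2 * lam * x)" by simp
  qed
  then show ?thesis by simp
qed

lemma integral_nonneg_any:
  fixes f :: "real \<Rightarrow> real"
  assumes "\<And>x. x \<in> S \<Longrightarrow> 0 \<le> f x"
  shows "0 \<le> integral S f"
proof (cases "f integrable_on S")
  case True then show ?thesis using assms by (rule integral_nonneg)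
next
  case False then show ?thesis by (simp add: not_integrable_integral)
qed

lemma shift1_minus:
  fixes g :: "nat \<Rightarrow> real"
  assumes g0: "\<And>i. 0 \<le> g i"
  shows "(\<Sum>j\<in>{1..N}. if 2 \<le> j \<and> j + 1 \<le> N then g (j - 1) else 0) \<le> (\<Sum>j\<in>{1..N}. g j)"
proof -
  define T where "T = {j \<in> {1..N}. 2 \<le> j \<and> j + 1 \<le> N}"
  have "(\<Sum>j\<in>{1..N}. if 2 \<le> j \<and> j + 1 \<le> N then g (j - 1) else 0) = (\<Sum>j\<in>T. g (j - 1))"
    unfolding T_def by (rule sum.inter_filter[symmetric]) simp
  also have "\<dots> = sum g ((\<lambda>j. j - 1) ` T)"
    by (rule sum.reindex[symmetric, unfolded comp_def]) (auto simp: T_def inj_on_def)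
  also have "\<dots> \<le> sum g {1..N}"
    by (rule sum_mono2) (auto simp: T_def g0)
  finally show ?thesis .
qed

lemma shift1_plus:
  fixes g :: "nat \<Rightarrow> real"
  assumes g0: "\<And>i. 0 \<le> g i"
  shows "(\<Sum>j\<in>{1..N}. if 2 \<le> j \<and> j + 1 \<le> N then g (j + 1) else 0) \<le> (\<Sum>j\<in>{1..N}. g j)"
proof -
  define T where "T = {j \<in> {1..N}. 2 \<le> j \<and> j + 1 \<le> N}"
  have "(\<Sum>j\<in>{1..N}. if 2 \<le> j \<and> j + 1 \<le> N then g (j + 1) else 0) = (\<Sum>j\<in>T. g (j + 1))"
    unfolding T_def by (rule sum.inter_filter[symmetric]) simp
  also have "\<dots> = sum g ((\<lambda>j. j + 1) ` T)"
    by (rule sum.reindex[symmetric, unfolded comp_def]) (auto simp: T_def inj_on_def)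
  also have "\<dots> \<le> sum g {1..N}"
    by (rule sum_mono2) (auto simp: T_def g0)
  finally show ?thesis .
qed

lemma if_sum_pull:
  "(\<Sum>s\<in>A. if P then f s else (0::real)) = (if P then (\<Sum>s\<in>A. f s) else 0)"
  by simp

lemma shift2:
  fixes F :: "nat \<Rightarrow> nat \<Rightarrow> real"
  assumes F0: "\<And>i k. 0 \<le> F i k"
  shows "(\<Sum>j\<in>{1..N}. \<Sum>s\<in>{1..N}. if grid_interior N j s then F (j - 1) s else 0) \<le> (\<Sum>j\<in>{1..N}. \<Sum>s\<in>{1..N}. F j s)"
    and "(\<Sum>j\<in>{1..N}. \<Sum>s\<in>{1..N}. if grid_interior N j s then F (j + 1) s else 0) \<le> (\<Sum>j\<in>{1..N}. \<Sum>s\<in>{1..N}. F j s)"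
    and "(\<Sum>j\<in>{1..N}. \<Sum>s\<in>{1..N}. if grid_interior N j s then F j (s - 1) else 0) \<le> (\<Sum>j\<in>{1..N}. \<Sum>s\<in>{1..N}. F j s)"
    and "(\<Sum>j\<in>{1..N}. \<Sum>s\<in>{1..N}. if grid_interior N j s then F j (s + 1) else 0) \<le> (\<Sum>j\<in>{1..N}. \<Sum>s\<in>{1..N}. F j s)"
    and "(\<Sum>j\<in>{1..N}. \<Sum>s\<in>{1..N}. if grid_interior N j s then F j s else 0) \<le> (\<Sum>j\<in>{1..N}. \<Sum>s\<in>{1..N}. F j s)"
proof -
  have G0: "0 \<le> (\<Sum>s\<in>{1..N}. F i s)" for i by (intro sum_nonneg F0)
  have "(\<Sum>j\<in>{1..N}. \<Sum>s\<in>{1..N}. if grid_interior N j s then F (j - 1) s else 0)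
      \<le> (\<Sum>j\<in>{1..N}. \<Sum>s\<in>{1..N}. if 2 \<le> j \<and> j + 1 \<le> N then F (j - 1) s else 0)"
    by (intro sum_mono) (auto simp: grid_interior_def F0)
  also have "\<dots> = (\<Sum>j\<in>{1..N}. if 2 \<le> j \<and> j + 1 \<le> N then (\<Sum>s\<in>{1..N}. F (j - 1) s) else 0)"
    by (simp only: if_sum_pull)
  also have "\<dots> \<le> (\<Sum>j\<in>{1..N}. \<Sum>s\<in>{1..N}. F j s)"
    by (rule shift1_minus[of "\<lambda>i. \<Sum>s\<in>{1..N}. F i s"]) (rule G0)
  finally show "(\<Sum>j\<in>{1..N}. \<Sum>s\<in>{1..N}. if grid_interior N j s then F (j - 1) s else 0) \<le> (\<Sum>j\<in>{1..N}. \<Sum>s\<in>{1..N}. F j s)" .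
  have "(\<Sum>j\<in>{1..N}. \<Sum>s\<in>{1..N}. if grid_interior N j s then F (j + 1) s else 0)
      \<le> (\<Sum>j\<in>{1..N}. \<Sum>s\<in>{1..N}. if 2 \<le> j \<and> j + 1 \<le> N then F (j + 1) s else 0)"
    by (intro sum_mono) (auto simp: grid_interior_def F0)
  also have "\<dots> = (\<Sum>j\<in>{1..N}. if 2 \<le> j \<and> j + 1 \<le> N then (\<Sum>s\<in>{1..N}. F (j + 1) s) else 0)"
    by (simp only: if_sum_pull)
  also have "\<dots> \<le> (\<Sum>j\<in>{1..N}. \<Sum>s\<in>{1..N}. F j s)"
    by (rule shift1_plus[of "\<lambda>i. \<Sum>s\<in>{1..N}. F i s"]) (rule G0)
  finally show "(\<Sum>j\<in>{1..N}. \<Sum>s\<in>{1..N}. if grid_interior N j s then F (j + 1) s else 0) \<le> (\<Sum>j\<in>{1..N}. \<Sum>s\<in>{1..N}. F j s)" .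
  have "(\<Sum>j\<in>{1..N}. \<Sum>s\<in>{1..N}. if grid_interior N j s then F j (s - 1) else 0)
      \<le> (\<Sum>j\<in>{1..N}. \<Sum>s\<in>{1..N}. if 2 \<le> s \<and> s + 1 \<le> N then F j (s - 1) else 0)"
    by (intro sum_mono) (auto simp: grid_interior_def F0)
  also have "\<dots> \<le> (\<Sum>j\<in>{1..N}. \<Sum>s\<in>{1..N}. F j s)"
    by (intro sum_mono shift1_minus F0)
  finally show "(\<Sum>j\<in>{1..N}. \<Sum>s\<in>{1..N}. if grid_interior N j s then F j (s - 1) else 0) \<le> (\<Sum>j\<in>{1..N}. \<Sum>s\<in>{1..N}. F j s)" .
  have "(\<Sum>j\<in>{1..N}. \<Sum>s\<in>{1..N}. if grid_interior N j s then F j (s + 1) else 0)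
      \<le> (\<Sum>j\<in>{1..N}. \<Sum>s\<in>{1..N}. if 2 \<le> s \<and> s + 1 \<le> N then F j (s + 1) else 0)"
    by (intro sum_mono) (auto simp: grid_interior_def F0)
  also have "\<dots> \<le> (\<Sum>j\<in>{1..N}. \<Sum>s\<in>{1..N}. F j s)"
    by (intro sum_mono shift1_plus F0)
  finally show "(\<Sum>j\<in>{1..N}. \<Sum>s\<in>{1..N}. if grid_interior N j s then F j (s + 1) else 0) \<le> (\<Sum>j\<in>{1..N}. \<Sum>s\<in>{1..N}. F j s)" .
  show "(\<Sum>j\<in>{1..N}. \<Sum>s\<in>{1..N}. if grid_interior N j s then F j s else 0) \<le> (\<Sum>j\<in>{1..N}. \<Sum>s\<in>{1..N}. F j s)"
    by (intro sum_mono) (auto simp: F0)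
qed

lemma cs5:
  fixes p q r t v :: real
  shows "(p + q + r + t + 4 * v)\<^sup>2 \<le> 8 * (p\<^sup>2 + q\<^sup>2 + r\<^sup>2 + t\<^sup>2 + 4 * v\<^sup>2)"
proof -
  have "8 * (p\<^sup>2 + q\<^sup>2 + r\<^sup>2 + t\<^sup>2 + 4 * v\<^sup>2) - (p + q + r + t + 4 * v)\<^sup>2 =
     (p - q)\<^sup>2 + (p - r)\<^sup>2 + (p - t)\<^sup>2 + 4 * (p - v)\<^sup>2 + (q - r)\<^sup>2 + (q - t)\<^sup>2 + 4 * (q - v)\<^sup>2
     + (r - t)\<^sup>2 + 4 * (r - v)\<^sup>2 + 4 * (t - v)\<^sup>2"
    unfolding power2_eq_square by algebra
  moreover have "0 \<le> (p - q)\<^sup>2 + (p - r)\<^sup>2 + (p - t)\<^sup>2 + 4 * (p - v)\<^sup>2 + (q - r)\<^sup>2 + (q - t)\<^sup>2 + 4 * (q - v)\<^sup>2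
     + (r - t)\<^sup>2 + 4 * (r - v)\<^sup>2 + 4 * (t - v)\<^sup>2" by simp
  ultimately show ?thesis by linarith
qed

lemma sqbound:
  fixes x0 x1 x2 x3 x4 :: complex and h :: real
  assumes h: "h > 0"
  shows "(cmod ((x1 - 2 * x0 + x2) / of_real (h\<^sup>2) + (x3 - 2 * x0 + x4) / of_real (h\<^sup>2)))\<^sup>2
     \<le> 8 / h ^ 4 * ((cmod x1)\<^sup>2 + (cmod x2)\<^sup>2 + (cmod x3)\<^sup>2 + (cmod x4)\<^sup>2 + 4 * (cmod x0)\<^sup>2)"
proof -
  have e: "(x1 - 2 * x0 + x2) / of_real (h\<^sup>2) + (x3 - 2 * x0 + x4) / of_real (h\<^sup>2) = (x1 + x2 + x3 + x4 - 4 * x0) / of_real (h\<^sup>2)"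
  proof -
    have "(x1 - 2 * x0 + x2) / of_real (h\<^sup>2) + (x3 - 2 * x0 + x4) / of_real (h\<^sup>2) = ((x1 - 2 * x0 + x2) + (x3 - 2 * x0 + x4)) / of_real (h\<^sup>2)"
      by (rule add_divide_distrib[symmetric])
    also have "(x1 - 2 * x0 + x2) + (x3 - 2 * x0 + x4) = x1 + x2 + x3 + x4 - 4 * x0"
      by (simp add: algebra_simps)
    finally show ?thesis .
  qed
  have n: "cmod (x1 + x2 + x3 + x4 - 4 * x0) \<le> cmod x1 + cmod x2 + cmod x3 + cmod x4 + 4 * cmod x0"
  proof -
    have "cmod (x1 + x2 + x3 + x4 - 4 * x0) \<le> cmod (x1 + x2 + x3 + x4) + cmod (4 * x0)" by (rule norm_triangle_ineq4)
    also have "cmod (x1 + x2 + x3 + x4) \<le> cmod x1 + cmod x2 + cmod x3 + cmod x4"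
    proof -
      have "cmod (x1 + x2 + x3 + x4) \<le> cmod (x1 + x2 + x3) + cmod x4" by (rule norm_triangle_ineq)
      moreover have "cmod (x1 + x2 + x3) \<le> cmod (x1 + x2) + cmod x3" by (rule norm_triangle_ineq)
      moreover have "cmod (x1 + x2) \<le> cmod x1 + cmod x2" by (rule norm_triangle_ineq)
      ultimately show ?thesis by linarith
    qed
    finally show ?thesis by (simp add: norm_mult)
  qed
  have nh: "cmod (complex_of_real (h\<^sup>2)) = h\<^sup>2" by (simp only: norm_of_real) simp
  have "(cmod ((x1 + x2 + x3 + x4 - 4 * x0) / of_real (h\<^sup>2)))\<^sup>2 = (cmod (x1 + x2 + x3 + x4 - 4 * x0) / h\<^sup>2)\<^sup>2"
    by (simp only: norm_divide nh)
  also have "\<dots> = (cmod (x1 + x2 + x3 + x4 - 4 * x0))\<^sup>2 / h ^ 4"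
    by (simp add: power_divide flip: power_mult)
  also have "\<dots> \<le> (cmod x1 + cmod x2 + cmod x3 + cmod x4 + 4 * cmod x0)\<^sup>2 / h ^ 4"
    using n h by (intro divide_right_mono power_mono) auto
  also have "\<dots> \<le> 8 * ((cmod x1)\<^sup>2 + (cmod x2)\<^sup>2 + (cmod x3)\<^sup>2 + (cmod x4)\<^sup>2 + 4 * (cmod x0)\<^sup>2) / h ^ 4"
    using h by (intro divide_right_mono cs5) auto
  finally show ?thesis unfolding e by simp
qed

lemma lap_lower:
  fixes g c :: "real \<Rightarrow> complex"
  assumes gm: "g \<in> borel_measurable (lebesgue_on {a..d})"
    and gi: "(\<lambda>z. (cmod (g z))\<^sup>2) integrable_on {a..d}"
    and cc: "continuous_on {a..d} c"
  shows "integral {a..d} (\<lambda>z. (cmod (g z + c z))\<^sup>2 * exp (-2 * lam * z)) \<ge>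
     1/2 * integral {a..d} (\<lambda>z. (cmod (g z))\<^sup>2 * exp (-2 * lam * z)) - integral {a..d} (\<lambda>z. (cmod (c z))\<^sup>2 * exp (-2 * lam * z))"
proof -
  have cm: "c \<in> borel_measurable (lebesgue_on {a..d})"
    by (rule continuous_imp_measurable_on_sets_lebesgue[OF cc]) auto
  have gcm: "(\<lambda>z. g z + c z) \<in> borel_measurable (lebesgue_on {a..d})"
    using gm cm by (rule borel_measurable_add)
  have ci: "(\<lambda>z. (cmod (c z))\<^sup>2) integrable_on {a..d}"
    by (intro integrable_continuous_real continuous_intros cc)
  have pw: "(cmod (g z))\<^sup>2 \<le> 2 * (cmod (g z + c z))\<^sup>2 + 2 * (cmod (c z))\<^sup>2" for z
  proof -
    have "cmod (g z) \<le> cmod (g z + c z) + cmod (c z)"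
      by (metis add_diff_cancel_right' norm_triangle_ineq4)
    then have "(cmod (g z))\<^sup>2 \<le> (cmod (g z + c z) + cmod (c z))\<^sup>2"
      by (intro power_mono) auto
    also have "\<dots> \<le> 2 * (cmod (g z + c z))\<^sup>2 + 2 * (cmod (c z))\<^sup>2"
    proof -
      have "0 \<le> (cmod (g z + c z) - cmod (c z))\<^sup>2" by simp
      then show ?thesis by (simp add: power2_eq_square algebra_simps)
    qed
    finally show ?thesis .
  qed
  have gci: "(\<lambda>z. (cmod (g z + c z))\<^sup>2) integrable_on {a..d}"
  proof (rule measurable_bounded_by_integrable_imp_integrable)
    show "(\<lambda>z. (cmod (g z + c z))\<^sup>2) \<in> borel_measurable (lebesgue_on {a..d})"
      using gcm by measurable
    show "(\<lambda>z. 2 * (cmod (g z))\<^sup>2 + 2 * (cmod (c z))\<^sup>2) integrable_on {a..d}"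
      using gi ci by (intro integrable_add integrable_on_mult_right)
    show "norm ((cmod (g z + c z))\<^sup>2) \<le> 2 * (cmod (g z))\<^sup>2 + 2 * (cmod (c z))\<^sup>2" for z
    proof -
      have "cmod (g z + c z) \<le> cmod (g z) + cmod (c z)" by (rule norm_triangle_ineq)
      then have "(cmod (g z + c z))\<^sup>2 \<le> (cmod (g z) + cmod (c z))\<^sup>2"
        by (intro power_mono) auto
      also have "\<dots> \<le> 2 * (cmod (g z))\<^sup>2 + 2 * (cmod (c z))\<^sup>2"
      proof -
        have "0 \<le> (cmod (g z) - cmod (c z))\<^sup>2" by simp
        then show ?thesis by (simp add: power2_eq_square algebra_simps)
      qed
      finally show ?thesis by simp
    qed
  qed auto
  have i1: "(\<lambda>z. (cmod (g z + c z))\<^sup>2 * exp (-2 * lam * z)) integrable_on {a..d}"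
    by (rule weighted_sq_integrable[OF gcm gci])
  have i2: "(\<lambda>z. (cmod (g z))\<^sup>2 * exp (-2 * lam * z)) integrable_on {a..d}"
    by (rule weighted_sq_integrable[OF gm gi])
  have i3: "(\<lambda>z. (cmod (c z))\<^sup>2 * exp (-2 * lam * z)) integrable_on {a..d}"
    by (intro integrable_continuous_real continuous_intros cc)
  have "integral {a..d} (\<lambda>z. 1/2 * ((cmod (g z))\<^sup>2 * exp (-2 * lam * z)) - (cmod (c z))\<^sup>2 * exp (-2 * lam * z))
      \<le> integral {a..d} (\<lambda>z. (cmod (g z + c z))\<^sup>2 * exp (-2 * lam * z))"
  proof (rule integral_le)
    show "(\<lambda>z. 1/2 * ((cmod (g z))\<^sup>2 * exp (-2 * lam * z)) - (cmod (c z))\<^sup>2 * exp (-2 * lam * z)) integrable_on {a..d}"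
      by (intro integrable_diff integrable_on_mult_right i2 i3)
    show "(\<lambda>z. (cmod (g z + c z))\<^sup>2 * exp (-2 * lam * z)) integrable_on {a..d}" by (rule i1)
    fix z
    have "1/2 * (cmod (g z))\<^sup>2 - (cmod (c z))\<^sup>2 \<le> (cmod (g z + c z))\<^sup>2" using pw[of z] by linarith
    then have "(1/2 * (cmod (g z))\<^sup>2 - (cmod (c z))\<^sup>2) * exp (-2 * lam * z) \<le> (cmod (g z + c z))\<^sup>2 * exp (-2 * lam * z)"
      by (intro mult_right_mono) auto
    then show "1/2 * ((cmod (g z))\<^sup>2 * exp (-2 * lam * z)) - (cmod (c z))\<^sup>2 * exp (-2 * lam * z) \<le> (cmod (g z + c z))\<^sup>2 * exp (-2 * lam * z)"
      by (simp add: algebra_simps)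
  qed
  also have "integral {a..d} (\<lambda>z. 1/2 * ((cmod (g z))\<^sup>2 * exp (-2 * lam * z)) - (cmod (c z))\<^sup>2 * exp (-2 * lam * z))
     = 1/2 * integral {a..d} (\<lambda>z. (cmod (g z))\<^sup>2 * exp (-2 * lam * z)) - integral {a..d} (\<lambda>z. (cmod (c z))\<^sup>2 * exp (-2 * lam * z))"
    using i2 i3 by (simp add: integral_diff integrable_on_mult_right)
  finally show ?thesis by simp
qed

lemma interior_point:
  fixes g u0 u1 u2 u3 u4 :: "real \<Rightarrow> complex"
  assumes h: "h > 0"
    and gm: "g \<in> borel_measurable (lebesgue_on {a..d})"
    and gi: "(\<lambda>z. (cmod (g z))\<^sup>2) integrable_on {a..d}"
    and c0: "continuous_on {a..d} u0" and c1: "continuous_on {a..d} u1" and c2: "continuous_on {a..d} u2"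
    and c3: "continuous_on {a..d} u3" and c4: "continuous_on {a..d} u4"
  shows "integral {a..d} (\<lambda>z. (cmod (g z + ((u1 z - 2 * u0 z + u2 z) / of_real (h\<^sup>2) + (u3 z - 2 * u0 z + u4 z) / of_real (h\<^sup>2))))\<^sup>2 * exp (-2 * lam * z))
    \<ge> 1/2 * integral {a..d} (\<lambda>z. (cmod (g z))\<^sup>2 * exp (-2 * lam * z))
       - 8 / h ^ 4 * (integral {a..d} (\<lambda>z. (cmod (u1 z))\<^sup>2 * exp (-2 * lam * z))
                    + integral {a..d} (\<lambda>z. (cmod (u2 z))\<^sup>2 * exp (-2 * lam * z))
                    + integral {a..d} (\<lambda>z. (cmod (u3 z))\<^sup>2 * exp (-2 * lam * z))
                    + integral {a..d} (\<lambda>z. (cmod (u4 z))\<^sup>2 * exp (-2 * lam * z))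
                    + 4 * integral {a..d} (\<lambda>z. (cmod (u0 z))\<^sup>2 * exp (-2 * lam * z)))"
proof -
  define c where "c z = (u1 z - 2 * u0 z + u2 z) / of_real (h\<^sup>2) + (u3 z - 2 * u0 z + u4 z) / of_real (h\<^sup>2)" for z
  have cc: "continuous_on {a..d} c" unfolding c_def
    by (intro continuous_intros c0 c1 c2 c3 c4) (use h in auto)
  define J where "J v = integral {a..d} (\<lambda>z. (cmod (v z))\<^sup>2 * exp (-2 * lam * z))" for v :: "real \<Rightarrow> complex"
  have Ji: "(\<lambda>z. (cmod (v z))\<^sup>2 * exp (-2 * lam * z)) integrable_on {a..d}" if "continuous_on {a..d} v" for v :: "real \<Rightarrow> complex"
    by (intro integrable_continuous_real continuous_intros that)
  have L: "integral {a..d} (\<lambda>z. (cmod (g z + c z))\<^sup>2 * exp (-2 * lam * z)) \<ge> 1/2 * integral {a..d} (\<lambda>z. (cmod (g z))\<^sup>2 * exp (-2 * lam * z)) - J c"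
    unfolding J_def by (rule lap_lower[OF gm gi cc])
  have "J c \<le> integral {a..d} (\<lambda>z. 8 / h ^ 4 * ((cmod (u1 z))\<^sup>2 * exp (-2 * lam * z) + (cmod (u2 z))\<^sup>2 * exp (-2 * lam * z)
          + (cmod (u3 z))\<^sup>2 * exp (-2 * lam * z) + (cmod (u4 z))\<^sup>2 * exp (-2 * lam * z) + 4 * ((cmod (u0 z))\<^sup>2 * exp (-2 * lam * z))))"
    unfolding J_def
  proof (rule integral_le)
    show "(\<lambda>z. (cmod (c z))\<^sup>2 * exp (-2 * lam * z)) integrable_on {a..d}" by (rule Ji[OF cc])
    show "(\<lambda>z. 8 / h ^ 4 * ((cmod (u1 z))\<^sup>2 * exp (-2 * lam * z) + (cmod (u2 z))\<^sup>2 * exp (-2 * lam * z)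
          + (cmod (u3 z))\<^sup>2 * exp (-2 * lam * z) + (cmod (u4 z))\<^sup>2 * exp (-2 * lam * z) + 4 * ((cmod (u0 z))\<^sup>2 * exp (-2 * lam * z)))) integrable_on {a..d}"
      by (intro integrable_on_mult_right integrable_add Ji c0 c1 c2 c3 c4)
    fix z
    have "(cmod (c z))\<^sup>2 \<le> 8 / h ^ 4 * ((cmod (u1 z))\<^sup>2 + (cmod (u2 z))\<^sup>2 + (cmod (u3 z))\<^sup>2 + (cmod (u4 z))\<^sup>2 + 4 * (cmod (u0 z))\<^sup>2)"
      unfolding c_def by (rule sqbound[OF h])
    then have "(cmod (c z))\<^sup>2 * exp (-2 * lam * z) \<le> 8 / h ^ 4 * ((cmod (u1 z))\<^sup>2 + (cmod (u2 z))\<^sup>2 + (cmod (u3 z))\<^sup>2 + (cmod (u4 z))\<^sup>2 + 4 * (cmod (u0 z))\<^sup>2) * exp (-2 * lam * z)"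
      by (rule mult_right_mono) simp
    then show "(cmod (c z))\<^sup>2 * exp (-2 * lam * z) \<le> 8 / h ^ 4 * ((cmod (u1 z))\<^sup>2 * exp (-2 * lam * z) + (cmod (u2 z))\<^sup>2 * exp (-2 * lam * z)
          + (cmod (u3 z))\<^sup>2 * exp (-2 * lam * z) + (cmod (u4 z))\<^sup>2 * exp (-2 * lam * z) + 4 * ((cmod (u0 z))\<^sup>2 * exp (-2 * lam * z)))"
      by (simp add: algebra_simps)
  qed
  also have "\<dots> = 8 / h ^ 4 * (J u1 + J u2 + J u3 + J u4 + 4 * J u0)"
    unfolding J_def
    using Ji[OF c0] Ji[OF c1] Ji[OF c2] Ji[OF c3] Ji[OF c4]
    by (simp add: integral_add integrable_add integrable_on_mult_right)
  finally have "J c \<le> 8 / h ^ 4 * (J u1 + J u2 + J u3 + J u4 + 4 * J u0)" .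
  with L show ?thesis unfolding J_def c_def by linarith
qed

theorem theorem7p1:
  fixes \<xi> d h :: real
  assumes "\<xi> > 0" and "d > 0" and "h > 0"
  shows "\<exists>lam0 C. lam0 > 1 \<and> C > 0 \<and>
    (\<forall>(b::real) (N::nat) (lam::real) u uz uzz.
       b > 0 \<and> real (N - 1) * h = 2 * b \<and> lam \<ge> lam0 \<and> in_H0_2h \<xi> d N u uz uzz \<longrightarrow>
       B_h \<xi> d h N lam u uzz \<ge>
         C * wsum \<xi> d h N (\<lambda>j s. True) lam uzz
         + C * lam * wsum \<xi> d h N (\<lambda>j s. True) lam uz
         + C * lam ^ 3 * wsum \<xi> d h N (\<lambda>j s. True) lam u)"
proof -
  have xi: "\<xi> > 0" and dd: "d > 0" and h: "h > 0" using assms by auto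
  define L where "L = d - (- \<xi>)"
  have L0: "L > 0" using xi dd by (simp add: L_def)
  define lam0 where "lam0 = 1 + 128 * L / h ^ 4"
  define C where "C = 1 / (4 * (1 + L))"
  have h4: "h ^ 4 > 0" using h by simp
  have lam0_gt: "lam0 > 1" unfolding lam0_def using L0 h4 by (simp add: divide_pos_pos)
  have C0: "C > 0" unfolding C_def using L0 by simp
  have main: "B_h \<xi> d h N lam u uzz \<ge>
         C * wsum \<xi> d h N (\<lambda>j s. True) lam uzz
         + C * lam * wsum \<xi> d h N (\<lambda>j s. True) lam uz
         + C * lam ^ 3 * wsum \<xi> d h N (\<lambda>j s. True) lam u"
    if lam: "lam \<ge> lam0" and H0: "in_H0_2h \<xi> d N u uz uzz" for N lam u uz uzz
  proof -
    have lam1: "lam > 1" using lam lam0_gt by simp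
    have lampos: "lam > 0" using lam1 by simp
    have lam3: "lam ^ 3 \<ge> 128 * L / h ^ 4"
    proof -
      have "lam ^ 3 \<ge> lam ^ 1" using lam1 by (intro power_increasing) auto
      then show ?thesis using lam unfolding lam0_def by simp
    qed
    have ad: "- \<xi> < d" using xi dd by simp
    define w where "w z = exp (-2 * lam * z)" for z
    define I0 where "I0 j s = integral {-\<xi>..d} (\<lambda>z. (cmod (u j s z))\<^sup>2 * exp (-2 * lam * z))" for j s
    define I1 where "I1 j s = integral {-\<xi>..d} (\<lambda>z. (cmod (uz j s z))\<^sup>2 * exp (-2 * lam * z))" for j s
    define I2 where "I2 j s = integral {-\<xi>..d} (\<lambda>z. (cmod (uzz j s z))\<^sup>2 * exp (-2 * lam * z))" for j s
    define IL where "IL j s = integral {-\<xi>..d} (\<lambda>z. (cmod (lap_h h u uzz j s z))\<^sup>2 * exp (-2 * lam * z))" for j s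
    have HH: "H2_on (-\<xi>) d (u j s) (uz j s) (uzz j s)" "u j s (-\<xi>) = 0" "uz j s (-\<xi>) = 0"
      "grid_boundary N j s \<Longrightarrow> z \<in> {-\<xi>..d} \<Longrightarrow> u j s z = 0"
      if "j \<in> {1..N}" "s \<in> {1..N}" for j s z
      using H0 that unfolding in_H0_2h_def by auto
    have I0nn: "0 \<le> I0 j s" for j s unfolding I0_def by (rule integral_nonneg_any) simp
    have I1nn: "0 \<le> I1 j s" for j s unfolding I1_def by (rule integral_nonneg_any) simp
    have I2nn: "0 \<le> I2 j s" for j s unfolding I2_def by (rule integral_nonneg_any) simp
    have P1: "lam * I1 j s \<le> L / 2 * I2 j s" if "j \<in> {1..N}" "s \<in> {1..N}" for j s
    proof -
      have "I1 j s \<le> L / (2 * lam) * I2 j s"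
        unfolding I1_def I2_def L_def
        by (rule crude_step[OF HH(1)[OF that] less_imp_le[OF ad] lampos HH(3)[OF that]])
      then have "lam * I1 j s \<le> lam * (L / (2 * lam) * I2 j s)" using lampos by (intro mult_left_mono) auto
      also have "\<dots> = L / 2 * I2 j s" using lampos by simp
      finally show ?thesis .
    qed
    have P2: "lam ^ 3 * I0 j s \<le> L / 2 * I2 j s" if "j \<in> {1..N}" "s \<in> {1..N}" for j s
    proof -
      have "lam\<^sup>2 * I0 j s \<le> I1 j s"
        unfolding I1_def I0_def
        by (rule c1_step[OF HH(1)[OF that] less_imp_le[OF ad] lampos HH(2)[OF that]])
      then have "lam * (lam\<^sup>2 * I0 j s) \<le> lam * I1 j s" using lampos by simp
      also have "\<dots> \<le> L / 2 * I2 j s" by (rule P1[OF that])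
      finally show ?thesis by (simp add: power3_eq_cube power2_eq_square mult.assoc)
    qed
    have P3: "I2 j s = 0" if "j \<in> {1..N}" "s \<in> {1..N}" "\<not> grid_interior N j s" for j s
    proof -
      have gb: "grid_boundary N j s" using that unfolding grid_boundary_def grid_interior_def by auto
      show ?thesis unfolding I2_def
        by (rule boundary_zero[OF HH(1)[OF that(1,2)] ad HH(4)[OF that(1,2) gb] HH(3)[OF that(1,2)]])
    qed
    have P4: "IL j s \<ge> 1/2 * I2 j s - 8 / h ^ 4 * (I0 (j - 1) s + I0 (j + 1) s + I0 j (s - 1) + I0 j (s + 1) + 4 * I0 j s)"
      if "j \<in> {1..N}" "s \<in> {1..N}" "grid_interior N j s" for j s
    proof -
      have r: "j - 1 \<in> {1..N}" "j + 1 \<in> {1..N}" "s - 1 \<in> {1..N}" "s + 1 \<in> {1..N}"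
        using that(3) unfolding grid_interior_def by auto
      note R = H2_reg[OF HH(1)[OF that(1,2)] less_imp_le[OF ad]]
      have gi: "(\<lambda>z. (cmod (uzz j s z))\<^sup>2) integrable_on {-\<xi>..d}"
        using HH(1)[OF that(1,2)] unfolding H2_on_def by auto
      have cont: "continuous_on {-\<xi>..d} (u k l)" if "k \<in> {1..N}" "l \<in> {1..N}" for k l
        by (rule H2_reg(7)[OF HH(1)[OF that] less_imp_le[OF ad]])
      have eq: "lap_h h u uzz j s z = uzz j s z + ((u (j - 1) s z - 2 * u j s z + u (j + 1) s z) / of_real (h\<^sup>2)
         + (u j (s - 1) z - 2 * u j s z + u j (s + 1) z) / of_real (h\<^sup>2))" for z
        unfolding lap_h_def by (simp add: add.assoc)
      show ?thesis
        unfolding IL_def I0_def I2_def eq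
        by (rule interior_point[OF h R(8) gi cont[OF that(1,2)] cont[OF r(1) that(2)] cont[OF r(2) that(2)]
              cont[OF that(1) r(3)] cont[OF that(1) r(4)]])
    qed
    define F where "F j s = h\<^sup>2 * I0 j s" for j s
    have F0: "0 \<le> F j s" for j s unfolding F_def using I0nn by simp
    define S0 where "S0 = (\<Sum>j\<in>{1..N}. \<Sum>s\<in>{1..N}. F j s)"
    define S1 where "S1 = (\<Sum>j\<in>{1..N}. \<Sum>s\<in>{1..N}. h\<^sup>2 * I1 j s)"
    define S2 where "S2 = (\<Sum>j\<in>{1..N}. \<Sum>s\<in>{1..N}. h\<^sup>2 * I2 j s)"
    have W0: "wsum \<xi> d h N (\<lambda>j s. True) lam u = S0"
      unfolding wsum_def carleman_weight_def S0_def F_def I0_def by simp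
    have W1: "wsum \<xi> d h N (\<lambda>j s. True) lam uz = S1"
      unfolding wsum_def carleman_weight_def S1_def I1_def by simp
    have W2: "wsum \<xi> d h N (\<lambda>j s. True) lam uzz = S2"
      unfolding wsum_def carleman_weight_def S2_def I2_def by simp
    have WB: "B_h \<xi> d h N lam u uzz = (\<Sum>j\<in>{1..N}. \<Sum>s\<in>{1..N}. if grid_interior N j s then h\<^sup>2 * IL j s else 0)"
      unfolding B_h_def wsum_def carleman_weight_def IL_def by simp
    define T1 where "T1 j s = (if grid_interior N j s then F (j - 1) s else 0)" for j s
    define T2 where "T2 j s = (if grid_interior N j s then F (j + 1) s else 0)" for j s
    define T3 where "T3 j s = (if grid_interior N j s then F j (s - 1) else 0)" for j s
    define T4 where "T4 j s = (if grid_interior N j s then F j (s + 1) else 0)" for j s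
    define T0 where "T0 j s = (if grid_interior N j s then F j s else 0)" for j s
    define T where "T j s = T1 j s + T2 j s + T3 j s + T4 j s + 4 * T0 j s" for j s
    have pt: "(if grid_interior N j s then h\<^sup>2 * IL j s else 0) \<ge> h\<^sup>2 / 2 * I2 j s - 8 / h ^ 4 * T j s"
      if js: "j \<in> {1..N}" "s \<in> {1..N}" for j s
    proof (cases "grid_interior N j s")
      case True
      have "h\<^sup>2 * IL j s \<ge> h\<^sup>2 * (1/2 * I2 j s - 8 / h ^ 4 * (I0 (j - 1) s + I0 (j + 1) s + I0 j (s - 1) + I0 j (s + 1) + 4 * I0 j s))"
        using P4[OF js True] by (intro mult_left_mono) auto
      moreover have "T j s = h\<^sup>2 * (I0 (j - 1) s + I0 (j + 1) s + I0 j (s - 1) + I0 j (s + 1) + 4 * I0 j s)"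
        using True unfolding T_def T0_def T1_def T2_def T3_def T4_def F_def by (simp add: algebra_simps)
      ultimately show ?thesis using True by (simp add: algebra_simps)
    next
      case False
      then show ?thesis using P3[OF js False] unfolding T_def T0_def T1_def T2_def T3_def T4_def by simp
    qed
    have B1: "B_h \<xi> d h N lam u uzz \<ge> (\<Sum>j\<in>{1..N}. \<Sum>s\<in>{1..N}. h\<^sup>2 / 2 * I2 j s - 8 / h ^ 4 * T j s)"
      unfolding WB by (intro sum_mono) (use pt in auto)
    have sumeq: "(\<Sum>j\<in>{1..N}. \<Sum>s\<in>{1..N}. h\<^sup>2 / 2 * I2 j s - 8 / h ^ 4 * T j s)
        = S2 / 2 - 8 / h ^ 4 * (\<Sum>j\<in>{1..N}. \<Sum>s\<in>{1..N}. T j s)"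
      unfolding S2_def by (simp add: sum_subtractf sum_distrib_left sum_divide_distrib)
    have Tsum: "(\<Sum>j\<in>{1..N}. \<Sum>s\<in>{1..N}. T j s) =
        (\<Sum>j\<in>{1..N}. \<Sum>s\<in>{1..N}. T1 j s) + (\<Sum>j\<in>{1..N}. \<Sum>s\<in>{1..N}. T2 j s)
      + (\<Sum>j\<in>{1..N}. \<Sum>s\<in>{1..N}. T3 j s) + (\<Sum>j\<in>{1..N}. \<Sum>s\<in>{1..N}. T4 j s)
      + 4 * (\<Sum>j\<in>{1..N}. \<Sum>s\<in>{1..N}. T0 j s)"
      unfolding T_def by (simp add: sum.distrib sum_distrib_left)
    have "(\<Sum>j\<in>{1..N}. \<Sum>s\<in>{1..N}. T1 j s) \<le> S0" unfolding T1_def S0_def by (rule shift2(1)[OF F0])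
    moreover have "(\<Sum>j\<in>{1..N}. \<Sum>s\<in>{1..N}. T2 j s) \<le> S0" unfolding T2_def S0_def by (rule shift2(2)[OF F0])
    moreover have "(\<Sum>j\<in>{1..N}. \<Sum>s\<in>{1..N}. T3 j s) \<le> S0" unfolding T3_def S0_def by (rule shift2(3)[OF F0])
    moreover have "(\<Sum>j\<in>{1..N}. \<Sum>s\<in>{1..N}. T4 j s) \<le> S0" unfolding T4_def S0_def by (rule shift2(4)[OF F0])
    moreover have "(\<Sum>j\<in>{1..N}. \<Sum>s\<in>{1..N}. T0 j s) \<le> S0" unfolding T0_def S0_def by (rule shift2(5)[OF F0])
    ultimately have Tb: "(\<Sum>j\<in>{1..N}. \<Sum>s\<in>{1..N}. T j s) \<le> 8 * S0" unfolding Tsum by linarith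
    have B2: "B_h \<xi> d h N lam u uzz \<ge> S2 / 2 - 64 / h ^ 4 * S0"
    proof -
      have "8 / h ^ 4 * (\<Sum>j\<in>{1..N}. \<Sum>s\<in>{1..N}. T j s) \<le> 8 / h ^ 4 * (8 * S0)"
        using Tb h4 by (intro mult_left_mono) auto
      then show ?thesis using B1 sumeq by simp
    qed
    have S0nn: "0 \<le> S0" unfolding S0_def by (intro sum_nonneg F0)
    have Q1: "lam * S1 \<le> L / 2 * S2"
    proof -
      have "lam * S1 = (\<Sum>j\<in>{1..N}. \<Sum>s\<in>{1..N}. h\<^sup>2 * (lam * I1 j s))"
        unfolding S1_def by (simp add: sum_distrib_left algebra_simps)
      also have "\<dots> \<le> (\<Sum>j\<in>{1..N}. \<Sum>s\<in>{1..N}. h\<^sup>2 * (L / 2 * I2 j s))"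
        by (intro sum_mono mult_left_mono P1) auto
      also have "\<dots> = L / 2 * S2"
        unfolding S2_def by (simp add: sum_distrib_left algebra_simps)
      finally show ?thesis .
    qed
    have Q0: "lam ^ 3 * S0 \<le> L / 2 * S2"
    proof -
      have "lam ^ 3 * S0 = (\<Sum>j\<in>{1..N}. \<Sum>s\<in>{1..N}. h\<^sup>2 * (lam ^ 3 * I0 j s))"
        unfolding S0_def F_def by (simp add: sum_distrib_left algebra_simps)
      also have "\<dots> \<le> (\<Sum>j\<in>{1..N}. \<Sum>s\<in>{1..N}. h\<^sup>2 * (L / 2 * I2 j s))"
        by (intro sum_mono mult_left_mono P2) auto
      also have "\<dots> = L / 2 * S2"
        unfolding S2_def by (simp add: sum_distrib_left algebra_simps)
      finally show ?thesis .
    qed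
    have Q2: "64 / h ^ 4 * S0 \<le> S2 / 4"
    proof -
      have "128 * L / h ^ 4 * S0 \<le> lam ^ 3 * S0" using lam3 S0nn by (rule mult_right_mono)
      then have "128 * L / h ^ 4 * S0 \<le> L / 2 * S2" using Q0 by linarith
      moreover have "128 * L / h ^ 4 * S0 = 2 * (L * (64 / h ^ 4 * S0))" by simp
      moreover have "L / 2 * S2 = 2 * (L * (S2 / 4))" by simp
      ultimately have "L * (64 / h ^ 4 * S0) \<le> L * (S2 / 4)" by linarith
      then show ?thesis using L0 by (rule mult_left_le_imp_le)
    qed
    have S2nn: "0 \<le> S2" unfolding S2_def using I2nn by (intro sum_nonneg mult_nonneg_nonneg) auto
    have "C * S2 + C * lam * S1 + C * lam ^ 3 * S0 \<le> C * S2 + C * (L / 2 * S2) + C * (L / 2 * S2)"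
      using Q1 Q0 C0 by (intro add_mono mult_left_mono) (auto simp: mult.assoc)
    also have "\<dots> = C * (1 + L) * S2" by (simp add: algebra_simps)
    also have "C * (1 + L) = 1 / 4" unfolding C_def using L0 by simp
    also have "1 / 4 * S2 = S2 / 4" by simp
    also have "\<dots> \<le> B_h \<xi> d h N lam u uzz" using B2 Q2 by linarith
    finally show ?thesis unfolding W0 W1 W2 .
  qed
  show ?thesis
    by (rule exI[of _ lam0], rule exI[of _ C]) (use lam0_gt C0 main in blast)
qed

end
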